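(* Let $\mathcal P,\mathcal Q$ be sets of propositional letters and let $(M,X)$, $(N,Y)$ be team models with $(M,X)\rightleftharpoons_{\mathcal P\cap\mathcal Q}(N,Y)$. Then there is a team model $(K,Z)$ such that $(M,X)\rightleftharpoons_{\mathcal P}(K,Z)$ and $(K,Z)\rightleftharpoons_{\mathcal Q}(N,Y)$.
   Context: A Kripke model is $M=(W,R,V)$ with $W$ nonempty, $R\subseteq W\times W$, $V:W\to\mathcal P(Prop)$; a team model is $(M,X)$ with $X\subseteq W$. For a set $\mathcal P$ of letters, a $\mathcal P$-bisimulation between $M=(W,R,V)$ and $M'=(W',R',V')$ is $B\subseteq W\times W'$ such that for all $(v,v')\in B$: $V(v)\cap\mathcal P=V'(v')\cap\mathcal P$; if $vRu$ there is $u'$ with $v'R'u'$ and $(u,u')\in B$; if $v'R'u'$ there is $u$ with $vRu$ and $(u,u')\in B$. $(M,w)\rightleftharpoons_{\mathcal P}(M',w')$ means some $\mathcal P$-bisimulation contains $(w,w')$. Team models are $\mathcal P$-bisimilar, $(M,X)\rightleftharpoons_{\mathcal P}(N,Y)$, if for every $x\in X$ there is $y\in Y$ with $(M,x)\rightleftharpoons_{\mathcal P}(N,y)$ and for every $y\in Y$ there is $x\in X$ with $(M,x)\rightleftharpoons_{\mathcal P}(N,y)$. *)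

theory Defs
  imports Main
begin

record ('w, 'p) kmodel =
  worlds :: "'w set"
  rel :: "('w \<times> 'w) set"
  val :: "'w \<Rightarrow> 'p set"

definition kripke_model :: "('w, 'p) kmodel \<Rightarrow> bool" where
  "kripke_model M \<longleftrightarrow> worlds M \<noteq> {} \<and> rel M \<subseteq> worlds M \<times> worlds M"

definition team_model :: "('w, 'p) kmodel \<Rightarrow> 'w set \<Rightarrow> bool" where
  "team_model M X \<longleftrightarrow> kripke_model M \<and> X \<subseteq> worlds M"

definition is_bisim :: "'p set \<Rightarrow> ('w, 'p) kmodel \<Rightarrow> ('v, 'p) kmodel \<Rightarrow> ('w \<times> 'v) set \<Rightarrow> bool" where
  "is_bisim P M M' B \<longleftrightarrow> B \<subseteq> worlds M \<times> worlds M' \<and>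
     (\<forall>(v, v') \<in> B.
        val M v \<inter> P = val M' v' \<inter> P \<and>
        (\<forall>u. (v, u) \<in> rel M \<longrightarrow> (\<exists>u'. (v', u') \<in> rel M' \<and> (u, u') \<in> B)) \<and>
        (\<forall>u'. (v', u') \<in> rel M' \<longrightarrow> (\<exists>u. (v, u) \<in> rel M \<and> (u, u') \<in> B)))"

definition pt_bisimilar :: "'p set \<Rightarrow> ('w, 'p) kmodel \<Rightarrow> 'w \<Rightarrow> ('v, 'p) kmodel \<Rightarrow> 'v \<Rightarrow> bool" where
  "pt_bisimilar P M w M' w' \<longleftrightarrow> (\<exists>B. is_bisim P M M' B \<and> (w, w') \<in> B)"

definition team_bisimilar :: "'p set \<Rightarrow> ('w, 'p) kmodel \<Rightarrow> 'w set \<Rightarrow> ('v, 'p) kmodel \<Rightarrow> 'v set \<Rightarrow> bool" where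
  "team_bisimilar P M X N Y \<longleftrightarrow>
     (\<forall>x \<in> X. \<exists>y \<in> Y. pt_bisimilar P M x N y) \<and>
     (\<forall>y \<in> Y. \<exists>x \<in> X. pt_bisimilar P M x N y)"

end

theory Submission
  imports Defs
begin

theorem mainTheorem4:
  fixes P Q :: "'p set"
    and M :: "('w, 'p) kmodel" and X :: "'w set"
    and N :: "('v, 'p) kmodel" and Y :: "'v set"
  assumes "team_model M X" and "team_model N Y"
    and "team_bisimilar (P \<inter> Q) M X N Y"
  shows "\<exists>(K :: ('w \<times> 'v, 'p) kmodel) Z. team_model K Z \<and>
           team_bisimilar P M X K Z \<and> team_bisimilar Q K Z N Y"
proof -
  define S where "S = (\<lambda>w v. pt_bisimilar (P \<inter> Q) M w N v)"
  have Sw: "w \<in> worlds M \<and> v \<in> worlds N" if "S w v" for w v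
    using that unfolding S_def pt_bisimilar_def is_bisim_def by blast
  have Sval: "val M w \<inter> (P \<inter> Q) = val N v \<inter> (P \<inter> Q)" if "S w v" for w v
    using that unfolding S_def pt_bisimilar_def is_bisim_def by blast
  have Sforth: "\<exists>u'. (v, u') \<in> rel N \<and> S u u'" if h: "S w v" "(w, u) \<in> rel M" for w v u
  proof -
    obtain B where B: "is_bisim (P \<inter> Q) M N B" "(w, v) \<in> B"
      using h(1) unfolding S_def pt_bisimilar_def by blast
    then obtain u' where "(v, u') \<in> rel N" "(u, u') \<in> B"
      using h(2) unfolding is_bisim_def by blast
    then show ?thesis using B unfolding S_def pt_bisimilar_def by blast
  qed
  have Sback: "\<exists>u. (w, u) \<in> rel M \<and> S u u'" if h: "S w v" "(v, u') \<in> rel N" for w v u'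
  proof -
    obtain B where B: "is_bisim (P \<inter> Q) M N B" "(w, v) \<in> B"
      using h(1) unfolding S_def pt_bisimilar_def by blast
    then obtain u where "(w, u) \<in> rel M" "(u, u') \<in> B"
      using h(2) unfolding is_bisim_def by blast
    then show ?thesis using B unfolding S_def pt_bisimilar_def by blast
  qed
  obtain w0 where w0: "w0 \<in> worlds M" using assms(1) unfolding team_model_def kripke_model_def by blast
  obtain v0 where v0: "v0 \<in> worlds N" using assms(2) unfolding team_model_def kripke_model_def by blast
  define K :: "('w \<times> 'v, 'p) kmodel" where "K = \<lparr>worlds = {(w, v). S w v} \<union> {(w0, v0)},
     rel = {((w, v), (w', v')). S w v \<and> S w' v' \<and> (w, w') \<in> rel M \<and> (v, v') \<in> rel N},
     val = (\<lambda>(w, v). (val M w \<inter> P) \<union> (val N v \<inter> Q))\<rparr>"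
  define Z where "Z = {(x, y). x \<in> X \<and> y \<in> Y \<and> S x y}"
  define B1 where "B1 = {(w, (w, v)) | w v. S w v}"
  define B2 where "B2 = {((w, v), v) | w v. S w v}"
  have km: "team_model K Z" unfolding team_model_def kripke_model_def K_def Z_def by auto
  have b1: "is_bisim P M K B1"
    unfolding is_bisim_def
  proof (intro conjI ballI)
    show "B1 \<subseteq> worlds M \<times> worlds K" unfolding B1_def K_def using Sw by auto
  next
    fix p assume "p \<in> B1"
    then obtain w v where p: "p = (w, (w, v))" "S w v" unfolding B1_def by blast
    have "val M w \<inter> P = val K (w, v) \<inter> P"
      using Sval[OF p(2)] unfolding K_def by auto
    moreover have "\<forall>u. (w, u) \<in> rel M \<longrightarrow> (\<exists>u'. ((w, v), u') \<in> rel K \<and> (u, u') \<in> B1)"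
    proof (intro allI impI)
      fix u assume "(w, u) \<in> rel M"
      then obtain u' where "(v, u') \<in> rel N" "S u u'" using Sforth p(2) by blast
      then show "\<exists>u''. ((w, v), u'') \<in> rel K \<and> (u, u'') \<in> B1"
        using p(2) \<open>(w, u) \<in> rel M\<close> unfolding K_def B1_def by (intro exI[of _ "(u, u')"]) auto
    qed
    moreover have "\<forall>u'. ((w, v), u') \<in> rel K \<longrightarrow> (\<exists>u. (w, u) \<in> rel M \<and> (u, u') \<in> B1)"
      unfolding K_def B1_def by auto
    ultimately show "case p of (v, v') \<Rightarrow> val M v \<inter> P = val K v' \<inter> P \<and>
        (\<forall>u. (v, u) \<in> rel M \<longrightarrow> (\<exists>u'. (v', u') \<in> rel K \<and> (u, u') \<in> B1)) \<and>
        (\<forall>u'. (v', u') \<in> rel K \<longrightarrow> (\<exists>u. (v, u) \<in> rel M \<and> (u, u') \<in> B1))"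
      using p(1) by simp
  qed
  have b2: "is_bisim Q K N B2"
    unfolding is_bisim_def
  proof (intro conjI ballI)
    show "B2 \<subseteq> worlds K \<times> worlds N" unfolding B2_def K_def using Sw by auto
  next
    fix p assume "p \<in> B2"
    then obtain w v where p: "p = ((w, v), v)" "S w v" unfolding B2_def by blast
    have "val K (w, v) \<inter> Q = val N v \<inter> Q"
      using Sval[OF p(2)] unfolding K_def by auto
    moreover have "\<forall>u'. (v, u') \<in> rel N \<longrightarrow> (\<exists>u. ((w, v), u) \<in> rel K \<and> (u, u') \<in> B2)"
    proof (intro allI impI)
      fix u' assume "(v, u') \<in> rel N"
      then obtain u where "(w, u) \<in> rel M" "S u u'" using Sback p(2) by blast
      then show "\<exists>u''. ((w, v), u'') \<in> rel K \<and> (u'', u') \<in> B2"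
        using p(2) \<open>(v, u') \<in> rel N\<close> unfolding K_def B2_def by (intro exI[of _ "(u, u')"]) auto
    qed
    moreover have "\<forall>u. ((w, v), u) \<in> rel K \<longrightarrow> (\<exists>u'. (v, u') \<in> rel N \<and> (u, u') \<in> B2)"
      unfolding K_def B2_def by auto
    ultimately show "case p of (v, v') \<Rightarrow> val K v \<inter> Q = val N v' \<inter> Q \<and>
        (\<forall>u. (v, u) \<in> rel K \<longrightarrow> (\<exists>u'. (v', u') \<in> rel N \<and> (u, u') \<in> B2)) \<and>
        (\<forall>u'. (v', u') \<in> rel N \<longrightarrow> (\<exists>u. (v, u) \<in> rel K \<and> (u, u') \<in> B2))"
      using p(1) by simp
  qed
  have p1: "pt_bisimilar P M w K (w, v)" if "S w v" for w v
    unfolding pt_bisimilar_def using b1 that unfolding B1_def by blast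
  have p2: "pt_bisimilar Q K (w, v) N v" if "S w v" for w v
    unfolding pt_bisimilar_def using b2 that unfolding B2_def by blast
  have tb: "(\<forall>x\<in>X. \<exists>y\<in>Y. S x y) \<and> (\<forall>y\<in>Y. \<exists>x\<in>X. S x y)"
    using assms(3) unfolding team_bisimilar_def S_def by blast
  have "team_bisimilar P M X K Z"
    unfolding team_bisimilar_def Z_def using tb p1 by fastforce
  moreover have "team_bisimilar Q K Z N Y"
    unfolding team_bisimilar_def Z_def using tb p2 by fastforce
  ultimately show ?thesis using km by blast
qed

end
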